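(* Let $n = 3$. Suppose $(\mu, \Sigma)$ and $(\mu', \Sigma')$ both satisfy the normalization below. Let $X \sim \mathcal{N}(\mu, \Sigma)$ and $X' \sim \mathcal{N}(\mu', \Sigma')$, and suppose that for every permutation $(i,j,k)$ of $\{1,2,3\}$, $$\Pr\{X_i \geq X_j \geq X_k\} = \Pr\{X'_i \geq X'_j \geq X'_k\}.$$ Then $\mu = \mu'$ and $\Sigma = \Sigma'$. In words, $(\mu,\Sigma)$ is uniquely identifiable from the three-way observation probabilities.
   Context: Probit model: utilities $X \sim \mathcal{N}(\mu, \Sigma)$ with $\mu \in \mathbb{R}^n$ and $\Sigma$ symmetric positive semidefinite. Normalization: $\langle \mu, \mathbf{1}\rangle = 0$, $\Sigma\mathbf{1} = 0$, $\operatorname{Tr}(\Sigma) = n$, and $\operatorname{rank}(\Sigma) = n-1$. The three-way observation probabilities are the probabilities of each of the six orderings of $(X_1, X_2, X_3)$. *)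

theory Defs
  imports "HOL-Probability.Probability"
begin

definition std_gauss3 :: "(real^3) measure" where
  "std_gauss3 = distr (PiM UNIV (\<lambda>_::3. density lborel std_normal_density)) borel
                      (\<lambda>f. \<chi> i. f i)"

text \<open>Gaussian law N(mu, A A^T): the law of X = mu + A Z with Z standard normal.\<close>
definition gauss3 :: "real^3 \<Rightarrow> real^3^3 \<Rightarrow> (real^3) measure" where
  "gauss3 mu A = distr std_gauss3 borel (\<lambda>z. mu + A *v z)"

definition ord_prob :: "real^3 \<Rightarrow> real^3^3 \<Rightarrow> 3 \<Rightarrow> 3 \<Rightarrow> 3 \<Rightarrow> real" where
  "ord_prob mu A i j k = measure (gauss3 mu A) {x. x$i \<ge> x$j \<and> x$j \<ge> x$k}"

definition normalized3 :: "real^3 \<Rightarrow> real^3^3 \<Rightarrow> bool" where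
  "normalized3 mu S \<longleftrightarrow>
     transpose S = S \<and> (\<forall>x. 0 \<le> x \<bullet> (S *v x)) \<and>
     (\<Sum>i\<in>UNIV. mu $ i) = 0 \<and> S *v (\<chi> i. 1) = 0 \<and>
     trace S = 3 \<and> rank S = 2"

end

theory Submission
  imports Defs
begin

lemma PiM_std_density:
  "PiM (UNIV::3 set) (\<lambda>_. std_normal_distribution) =
   density (PiM UNIV (\<lambda>_. lborel)) (\<lambda>f. \<Prod>i\<in>UNIV. ennreal (std_normal_density (f i)))"
proof -
  interpret N: product_sigma_finite "\<lambda>_::3. std_normal_distribution"
    unfolding product_sigma_finite_def
    using prob_space_imp_sigma_finite[OF prob_space_normal_density] by auto
  interpret L: product_sigma_finite "\<lambda>_::3. lborel :: real measure"
    unfolding product_sigma_finite_def by (auto intro: lborel.sigma_finite_measure_axioms)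
  show ?thesis
  proof (rule N.PiM_eqI[symmetric])
    show "sets (density (PiM UNIV (\<lambda>_. lborel)) (\<lambda>f. \<Prod>i\<in>UNIV. ennreal (std_normal_density (f i)))) =
      sets (PiM (UNIV::3 set) (\<lambda>_. std_normal_distribution))"
      by (simp only: sets_density, intro sets_PiM_cong) auto
  next
    fix A :: "3 \<Rightarrow> real set" assume A: "\<And>i. i \<in> UNIV \<Longrightarrow> A i \<in> sets std_normal_distribution"
    have Am[measurable]: "A i \<in> sets borel" for i using A by auto
    have "emeasure (density (PiM UNIV (\<lambda>_. lborel)) (\<lambda>f. \<Prod>i\<in>UNIV. ennreal (std_normal_density (f i)))) (PiE UNIV A)
       = (\<integral>\<^sup>+ f. (\<Prod>i\<in>UNIV. ennreal (std_normal_density (f i)) * indicator (A i) (f i)) \<partial>PiM UNIV (\<lambda>_. lborel))"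
      apply (subst emeasure_density)
        apply measurable
      apply (intro nn_integral_cong)
      apply (simp add: prod.distrib indicator_def PiE_iff)
      done
    also have "\<dots> = (\<Prod>i\<in>UNIV. \<integral>\<^sup>+ x. ennreal (std_normal_density x) * indicator (A i) x \<partial>lborel)"
      by (rule L.product_nn_integral_prod) auto
    also have "\<dots> = (\<Prod>i\<in>UNIV. emeasure std_normal_distribution (A i))"
      by (intro prod.cong refl) (simp add: emeasure_density)
    finally show "emeasure (density (PiM UNIV (\<lambda>_. lborel)) (\<lambda>f. \<Prod>i\<in>UNIV. ennreal (std_normal_density (f i)))) (PiE UNIV A)
        = (\<Prod>i\<in>UNIV. emeasure std_normal_distribution (A i))" .
  qed simp
qed

lemma measurable_vec_lambda3[measurable]:
  "(vec_lambda :: (3 \<Rightarrow> real) \<Rightarrow> real^3) \<in> PiM UNIV (\<lambda>_. lborel) \<rightarrow>\<^sub>M borel"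
proof (subst borel_measurable_euclidean_space, intro ballI)
  fix b :: "real^3" assume "b \<in> Basis"
  then obtain i where b: "b = axis i 1" by (auto simp: Basis_vec_def)
  have "(\<lambda>x::3\<Rightarrow>real. vec_lambda x \<bullet> b) = (\<lambda>x. x i)"
    by (simp add: b inner_axis)
  then show "(\<lambda>x. vec_lambda x \<bullet> b) \<in> borel_measurable (PiM UNIV (\<lambda>_. lborel))"
    by simp
qed

lemma prod_Basis3: "(\<Prod>b\<in>(Basis::(real^3) set). f b) = (\<Prod>i\<in>UNIV. f (axis i 1))"
proof -
  have "(Basis::(real^3) set) = (\<lambda>i. axis i 1) ` UNIV" by (auto simp: Basis_vec_def)
  moreover have "inj (\<lambda>i::3. axis i (1::real))" by (auto simp: inj_def axis_eq_axis)
  ultimately show ?thesis using prod.reindex[of "\<lambda>i::3. axis i (1::real)" UNIV f] by (simp add: comp_def)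
qed

lemma distr_vec_lborel3:
  "distr (PiM (UNIV::3 set) (\<lambda>_. lborel)) borel vec_lambda = (lborel :: (real^3) measure)"
proof (rule lborel_eqI[symmetric])
  interpret L: product_sigma_finite "\<lambda>_::3. lborel :: real measure"
    unfolding product_sigma_finite_def by (auto intro: lborel.sigma_finite_measure_axioms)
  fix l u :: "real^3" assume le: "\<And>b. b \<in> Basis \<Longrightarrow> l \<bullet> b \<le> u \<bullet> b"
  have le': "l$i \<le> u$i" for i using le[of "axis i 1"] by (auto simp: Basis_vec_def inner_axis)
  have "vec_lambda -` box l u \<inter> space (PiM (UNIV::3 set) (\<lambda>_. lborel)) = PiE UNIV (\<lambda>i. {l$i<..<u$i})"
    by (auto simp: mem_box_cart space_PiM PiE_iff)
  then have "emeasure (distr (PiM (UNIV::3 set) (\<lambda>_. lborel)) borel vec_lambda) (box l u)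
      = emeasure (PiM (UNIV::3 set) (\<lambda>_. lborel)) (PiE UNIV (\<lambda>i. {l$i<..<u$i}))"
    by (subst emeasure_distr) auto
  also have "\<dots> = (\<Prod>i\<in>UNIV. ennreal (u$i - l$i))"
    using le' by (subst L.emeasure_PiM) auto
  also have "\<dots> = (\<Prod>b\<in>Basis. ennreal ((u - l) \<bullet> b))"
    by (simp add: prod_Basis3 inner_axis)
  also have "\<dots> = ennreal (\<Prod>b\<in>Basis. (u - l) \<bullet> b)"
    using le by (intro prod_ennreal) (auto simp: inner_diff_left)
  finally show "emeasure (distr (PiM (UNIV::3 set) (\<lambda>_. lborel)) borel vec_lambda) (box l u) = (\<Prod>b\<in>Basis. (u - l) \<bullet> b)" .
qed simp

definition refl3 :: "real^3 \<Rightarrow> real^3 \<Rightarrow> real^3" where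
  "refl3 n x = x - (2 * (n \<bullet> x)) *\<^sub>R n"

lemma refl3_inner: "refl3 n a \<bullet> z = a \<bullet> refl3 n z"
  by (simp add: refl3_def algebra_simps inner_commute)

lemma refl3_invol: "norm n = 1 \<Longrightarrow> refl3 n (refl3 n x) = x"
proof -
  assume "norm n = 1"
  then have "n \<bullet> n = 1" by (simp add: norm_eq_1)
  then show ?thesis by (simp add: refl3_def algebra_simps)
qed

lemma refl3_linear: "linear (refl3 n)"
  by (auto simp: linear_iff refl3_def algebra_simps)

lemma refl3_norm: "norm n = 1 \<Longrightarrow> norm (refl3 n x) = norm x"
proof -
  assume "norm n = 1"
  then have "refl3 n x \<bullet> refl3 n x = x \<bullet> x"
    by (simp add: refl3_inner refl3_invol)
  then show ?thesis by (simp add: norm_eq_sqrt_inner)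
qed

lemma refl3_orth: "norm n = 1 \<Longrightarrow> orthogonal_transformation (refl3 n)"
  by (simp add: orthogonal_transformation refl3_linear refl3_norm)

lemma refl3_measurable[measurable]: "refl3 n \<in> borel_measurable borel"
  unfolding refl3_def by measurable

lemma emeasure_lborel_lebesgue: "S \<in> sets borel \<Longrightarrow> emeasure lebesgue S = emeasure lborel S"
  by (simp add: emeasure_completion main_part_sets)

lemma distr_refl3_lborel:
  assumes n: "norm n = 1"
  shows "distr lborel borel (refl3 n) = lborel"
proof (rule lborel_eqI[symmetric])
  fix l u :: "real^3" assume le: "\<And>b. b \<in> Basis \<Longrightarrow> l \<bullet> b \<le> u \<bullet> b"
  have eq: "refl3 n -` box l u = refl3 n ` box l u"
    using refl3_invol[OF n] by (auto simp: image_iff) (metis)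
  have bm: "refl3 n -` box l u \<in> sets borel" using measurable_sets[OF refl3_measurable, of "box l u" n] by simp
  have "emeasure (distr lborel borel (refl3 n)) (box l u) = emeasure lborel (refl3 n -` box l u)"
    by (subst emeasure_distr) auto
  also have "\<dots> = emeasure lebesgue (refl3 n ` box l u)"
    using bm eq by (simp add: emeasure_lborel_lebesgue)
  also have "\<dots> = ennreal (measure lebesgue (refl3 n ` box l u))"
    by (intro emeasure_eq_measure2 measurable_orthogonal_image refl3_orth n) auto
  also have "\<dots> = ennreal (measure lebesgue (box l u))"
    by (simp add: measure_orthogonal_image refl3_orth n)
  also have "\<dots> = emeasure lebesgue (box l u)"
    by (rule emeasure_eq_measure2[symmetric]) auto
  also have "\<dots> = emeasure lborel (box l u)"
    by (simp add: emeasure_lborel_lebesgue)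
  finally show "emeasure (distr lborel borel (refl3 n)) (box l u) = (\<Prod>b\<in>Basis. (u - l) \<bullet> b)"
    using le by (simp add: emeasure_lborel_box_eq)
qed simp

definition g3 :: "real^3 \<Rightarrow> ennreal" where
  "g3 x = (\<Prod>i\<in>UNIV. ennreal (std_normal_density (x$i)))"

lemma g3_measurable[measurable]: "g3 \<in> borel_measurable borel"
  unfolding g3_def by measurable

lemma std_gauss3_density: "std_gauss3 = density lborel g3"
proof -
  have "density lborel g3 = density (distr (PiM UNIV (\<lambda>_. lborel)) borel vec_lambda) g3"
    by (simp add: distr_vec_lborel3)
  also have "\<dots> = distr (density (PiM UNIV (\<lambda>_. lborel)) (\<lambda>x. g3 (vec_lambda x))) borel vec_lambda"
    by (rule density_distr) measurable
  also have "(\<lambda>x. g3 (vec_lambda x)) = (\<lambda>f. \<Prod>i\<in>UNIV. ennreal (std_normal_density (f i)))"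
    by (simp add: g3_def)
  finally show ?thesis by (simp add: std_gauss3_def PiM_std_density)
qed

lemma g3_formula: "g3 x = ennreal ((1 / sqrt (2 * pi)) ^ 3 * exp (- (norm x)\<^sup>2 / 2))"
proof -
  have "g3 x = ennreal (\<Prod>i\<in>UNIV. std_normal_density (x$i))"
    unfolding g3_def by (rule prod_ennreal) (simp add: normal_density_nonneg)
  also have "(\<Prod>i\<in>UNIV. std_normal_density (x$i)) = (\<Prod>i\<in>(UNIV::3 set). (1 / sqrt (2 * pi)) * exp (- (x$i)\<^sup>2 / 2))"
    by (simp add: std_normal_density_def)
  also have "\<dots> = (1 / sqrt (2 * pi)) ^ 3 * exp (\<Sum>i\<in>UNIV. - (x$i)\<^sup>2 / 2)"
    by (simp only: prod.distrib prod_constant exp_sum[OF finite_class.finite_UNIV]) simp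
  also have "(\<Sum>i\<in>UNIV. - (x$i)\<^sup>2 / 2) = - (norm x)\<^sup>2 / 2"
  proof -
    have "(norm x)\<^sup>2 = (\<Sum>i\<in>UNIV. (x$i)\<^sup>2)"
      unfolding power2_norm_eq_inner by (simp add: inner_vec_def power2_eq_square)
    then show ?thesis by (simp add: sum_negf sum_divide_distrib)
  qed
  finally show ?thesis .
qed

lemma std_gauss3_refl:
  assumes n: "norm n = 1" and E: "E \<in> sets borel"
  shows "emeasure std_gauss3 (refl3 n -` E) = emeasure std_gauss3 E"
proof -
  have E'[measurable]: "E \<in> sets borel" by (rule E)
  have "emeasure std_gauss3 (refl3 n -` E) = (\<integral>\<^sup>+x. g3 x * indicator (refl3 n -` E) x \<partial>lborel)"
    unfolding std_gauss3_density using measurable_sets[OF refl3_measurable E, of n]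
    by (subst emeasure_density) auto
  also have "\<dots> = (\<integral>\<^sup>+x. g3 (refl3 n x) * indicator E (refl3 n x) \<partial>lborel)"
    by (intro nn_integral_cong) (simp add: g3_formula refl3_norm n indicator_def)
  also have "\<dots> = (\<integral>\<^sup>+y. g3 y * indicator E y \<partial>distr lborel borel (refl3 n))"
    by (subst nn_integral_distr) auto
  also have "\<dots> = emeasure std_gauss3 E"
    unfolding std_gauss3_density distr_refl3_lborel[OF n] by (subst emeasure_density) auto
  finally show ?thesis .
qed


lemma prob_space_std_gauss3: "prob_space std_gauss3"
proof -
  have ps: "prob_space (PiM (UNIV::3 set) (\<lambda>_. std_normal_distribution))"
    by (rule prob_space_PiM) (simp add: prob_space_normal_density)
  have "vec_lambda \<in> PiM (UNIV::3 set) (\<lambda>_. std_normal_distribution) \<rightarrow>\<^sub>M (borel :: (real^3) measure)"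
  proof -
    have "sets (PiM (UNIV::3 set) (\<lambda>_. std_normal_distribution)) = sets (PiM (UNIV::3 set) (\<lambda>_. lborel))"
      by (intro sets_PiM_cong) auto
    then show ?thesis using measurable_vec_lambda3 measurable_cong_sets by blast
  qed
  then show ?thesis unfolding std_gauss3_def
    by (rule prob_space.prob_space_distr[OF ps])
qed

interpretation G3: prob_space std_gauss3 by (rule prob_space_std_gauss3)

lemma sets_std_gauss3[simp, measurable_cong]: "sets std_gauss3 = sets borel"
  by (simp add: std_gauss3_def)

lemma space_std_gauss3[simp]: "space std_gauss3 = UNIV"
  by (simp add: std_gauss3_def)

lemma g3_pos: "g3 x \<noteq> 0"
  by (simp add: g3_formula)

lemma std_gauss3_open_pos:
  assumes U: "open U" and x: "x \<in> U"
  shows "0 < measure std_gauss3 U"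
proof -
  obtain a b where ab: "box a b \<subseteq> U" "x \<in> box a b" "\<forall>i\<in>Basis. a \<bullet> i < b \<bullet> i"
    using open_contains_box[OF U x] by blast
  have lb: "emeasure lborel (box a b) \<noteq> 0"
    using ab(3) by (auto simp: emeasure_lborel_box_eq inner_diff_left prod_pos less_imp_le)
  have "emeasure std_gauss3 (box a b) \<noteq> 0"
  proof
    assume "emeasure std_gauss3 (box a b) = 0"
    then have "(\<integral>\<^sup>+x. g3 x * indicator (box a b) x \<partial>lborel) = 0"
      by (simp add: std_gauss3_density emeasure_density)
    then have "AE x in lborel. g3 x * indicator (box a b) x = 0"
      by (subst (asm) nn_integral_0_iff_AE) auto
    then have "AE x in lborel. x \<notin> box a b"
      by (rule eventually_mono) (auto simp: g3_pos indicator_def split: if_splits)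
    then have "emeasure lborel (box a b) = 0"
      by (subst (asm) AE_iff_measurable[of "box a b"]) auto
    with lb show False by simp
  qed
  then have "0 < measure std_gauss3 (box a b)"
    by (simp add: G3.emeasure_eq_measure zero_less_measure_iff)
  also have "\<dots> \<le> measure std_gauss3 U"
    using ab U by (intro G3.finite_measure_mono) (auto simp: borel_open)
  finally show ?thesis .
qed

lemma std_gauss3_hyperplane:
  assumes "a \<noteq> 0"
  shows "measure std_gauss3 {z. a \<bullet> z = \<alpha>} = 0"
proof -
  have "{z. a \<bullet> z = \<alpha>} \<in> null_sets lebesgue"
    using negligible_hyperplane[of a \<alpha>] assms by (simp add: negligible_iff_null_sets)
  then have "emeasure lebesgue {z. a \<bullet> z = \<alpha>} = 0" by auto
  moreover have hb: "{z. a \<bullet> z = \<alpha>} \<in> sets borel"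
    using closed_hyperplane by (rule borel_closed)
  ultimately have "{z. a \<bullet> z = \<alpha>} \<in> null_sets lborel"
    by (simp add: emeasure_lborel_lebesgue null_sets_def)
  then have "{z. a \<bullet> z = \<alpha>} \<in> null_sets std_gauss3"
    unfolding std_gauss3_density
    by (subst null_sets_density_iff) (auto intro: AE_not_in eventually_mono)
  then show ?thesis using null_setsD1[OF \<open>{z. a \<bullet> z = \<alpha>} \<in> null_sets std_gauss3\<close>] by (simp add: measure_def)
qed

lemma std_gauss3_refl_measure:
  assumes n: "norm n = 1" and E: "E \<in> sets borel"
  shows "measure std_gauss3 (refl3 n -` E) = measure std_gauss3 E"
  using std_gauss3_refl[OF assms] by (simp add: measure_def)

lemma refl3_swap:
  assumes a: "norm a = 1" and b: "norm b = 1" and ne: "a \<noteq> b"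
  shows "\<exists>n. norm n = 1 \<and> refl3 n a = b \<and> refl3 n b = a"
proof -
  define d where "d = a - b"
  have dn: "d \<noteq> 0" using ne by (simp add: d_def)
  have aa: "a \<bullet> a = 1" and bb: "b \<bullet> b = 1" using a b by (simp_all add: norm_eq_1)
  have dd: "d \<bullet> d = 2 - 2 * (a \<bullet> b)" by (simp add: d_def algebra_simps aa bb inner_commute)
  have da: "d \<bullet> a = (d \<bullet> d) / 2" and db: "d \<bullet> b = - (d \<bullet> d) / 2"
    using dd by (simp_all add: d_def algebra_simps aa bb inner_commute)
  have ddpos: "d \<bullet> d \<noteq> 0" using dn by simp
  define n where "n = (1 / norm d) *\<^sub>R d"
  have nn: "norm n = 1" using dn by (simp add: n_def)
  have r: "refl3 n x = x - (2 * (d \<bullet> x) / (d \<bullet> d)) *\<^sub>R d" for x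
    using dn by (simp add: refl3_def n_def power2_norm_eq_inner[symmetric] power2_eq_square)
  have c1: "2 * (d \<bullet> a) / (d \<bullet> d) = 1" using da ddpos by simp
  have c2: "2 * (d \<bullet> b) / (d \<bullet> d) = -1" using db ddpos by simp
  have "refl3 n a = b" by (simp only: r c1) (simp add: d_def)
  moreover have "refl3 n b = a" by (simp only: r c2) (simp add: d_def)
  ultimately show ?thesis using nn by blast
qed

lemma refl3_inner_pres: "norm n = 1 \<Longrightarrow> refl3 n a \<bullet> refl3 n b = a \<bullet> b"
  by (simp add: refl3_inner refl3_invol)

lemma split_meas:
  assumes "X \<in> sets borel" "Y \<in> sets borel"
  shows "measure std_gauss3 X = measure std_gauss3 (X \<inter> Y) + measure std_gauss3 (X - Y)"
proof -
  have "measure std_gauss3 X = measure std_gauss3 ((X \<inter> Y) \<union> (X - Y))"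
    by (rule arg_cong[where f="measure std_gauss3"]) auto
  also have "\<dots> = measure std_gauss3 (X \<inter> Y) + measure std_gauss3 (X - Y)"
    using assms by (intro G3.finite_measure_Union) auto
  finally show ?thesis .
qed

lemma HS_refl:
  assumes n: "norm n = 1"
  shows "measure std_gauss3 {z. \<alpha> \<le> refl3 n a \<bullet> z} = measure std_gauss3 {z. \<alpha> \<le> a \<bullet> z}"
proof -
  have "refl3 n -` {z. \<alpha> \<le> a \<bullet> z} = {z. \<alpha> \<le> refl3 n a \<bullet> z}"
    by (auto simp: refl3_inner)
  moreover have "{z. \<alpha> \<le> a \<bullet> z} \<in> sets borel" by measurable
  ultimately show ?thesis using std_gauss3_refl_measure[OF n] by metis
qed

lemma HS_unit_eq:
  assumes "norm a = 1" "norm a' = 1"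
  shows "measure std_gauss3 {z. \<alpha> \<le> a \<bullet> z} = measure std_gauss3 {z. \<alpha> \<le> a' \<bullet> z}"
proof (cases "a = a'")
  case False
  then obtain n where "norm n = 1" "refl3 n a = a'" using refl3_swap assms by blast
  then show ?thesis using HS_refl by metis
qed simp

lemma HS_strict:
  assumes a: "a \<noteq> 0" and lt: "\<alpha> < \<beta>"
  shows "measure std_gauss3 {z. \<beta> \<le> a \<bullet> z} < measure std_gauss3 {z. \<alpha> \<le> a \<bullet> z}"
proof -
  define Ob where "Ob = {z. \<alpha> < a \<bullet> z} \<inter> {z. a \<bullet> z < \<beta>}"
  have oOb: "open Ob" unfolding Ob_def by (intro open_Int open_halfspace_gt open_halfspace_lt)
  define z0 where "z0 = (((\<alpha> + \<beta>) / 2) / (a \<bullet> a)) *\<^sub>R a"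
  have "a \<bullet> z0 = (\<alpha> + \<beta>) / 2" using a by (simp add: z0_def)
  then have "z0 \<in> Ob" using lt by (simp add: Ob_def)
  then have pos: "0 < measure std_gauss3 Ob" by (rule std_gauss3_open_pos[OF oOb])
  have sp: "measure std_gauss3 {z. \<alpha> \<le> a \<bullet> z} = measure std_gauss3 ({z. \<alpha> \<le> a \<bullet> z} \<inter> {z. \<beta> \<le> a \<bullet> z}) + measure std_gauss3 ({z. \<alpha> \<le> a \<bullet> z} - {z. \<beta> \<le> a \<bullet> z})"
    by (intro split_meas) measurable
  have ii: "{z. \<alpha> \<le> a \<bullet> z} \<inter> {z. \<beta> \<le> a \<bullet> z} = {z. \<beta> \<le> a \<bullet> z}" using lt by auto
  moreover have "measure std_gauss3 Ob \<le> measure std_gauss3 ({z. \<alpha> \<le> a \<bullet> z} - {z. \<beta> \<le> a \<bullet> z})"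
    by (intro G3.finite_measure_mono) (auto simp: Ob_def)
  ultimately show ?thesis using sp pos unfolding ii by linarith
qed

lemma HS_inj:
  assumes "norm a = 1" "norm a' = 1"
    and eq: "measure std_gauss3 {z. \<alpha> \<le> a \<bullet> z} = measure std_gauss3 {z. \<alpha>' \<le> a' \<bullet> z}"
  shows "\<alpha> = \<alpha>'"
proof -
  have a0: "a \<noteq> 0" using assms by auto
  have eq': "measure std_gauss3 {z. \<alpha> \<le> a \<bullet> z} = measure std_gauss3 {z. \<alpha>' \<le> a \<bullet> z}"
    using eq HS_unit_eq[OF assms(1,2), of \<alpha>'] by simp
  show ?thesis
  proof (rule ccontr)
    assume "\<alpha> \<noteq> \<alpha>'"
    then consider "\<alpha> < \<alpha>'" | "\<alpha>' < \<alpha>" by linarith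
    then show False
    proof cases
      case 1 show False using HS_strict[OF a0 1] eq' by simp
    next
      case 2 show False using HS_strict[OF a0 2] eq' by simp
    qed
  qed
qed

lemma W_refl:
  assumes n: "norm n = 1"
  shows "measure std_gauss3 {z. \<alpha> \<le> refl3 n a \<bullet> z \<and> \<beta> \<le> refl3 n b \<bullet> z}
       = measure std_gauss3 {z. \<alpha> \<le> a \<bullet> z \<and> \<beta> \<le> b \<bullet> z}"
proof -
  have e: "refl3 n -` {z. \<alpha> \<le> a \<bullet> z \<and> \<beta> \<le> b \<bullet> z} = {z. \<alpha> \<le> refl3 n a \<bullet> z \<and> \<beta> \<le> refl3 n b \<bullet> z}"
    by (auto simp: refl3_inner)
  have m: "{z. \<alpha> \<le> a \<bullet> z \<and> \<beta> \<le> b \<bullet> z} \<in> sets borel" by measurable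
  show ?thesis using std_gauss3_refl_measure[OF n m] unfolding e .
qed


lemma W_strict:
  assumes a: "norm a = 1" and b: "norm b = 1" and b2: "norm b2 = 1" and lt: "a \<bullet> b2 < a \<bullet> b"
  shows "measure std_gauss3 {z. \<alpha> \<le> a \<bullet> z \<and> \<beta> \<le> b2 \<bullet> z}
       < measure std_gauss3 {z. \<alpha> \<le> a \<bullet> z \<and> \<beta> \<le> b \<bullet> z}"
proof -
  have ne: "b \<noteq> b2" using lt by auto
  obtain n where n: "norm n = 1" "refl3 n b = b2" "refl3 n b2 = b"
    using refl3_swap[OF b b2 ne] by blast
  define Ra where "Ra = refl3 n a"
  define d where "d = b - b2"
  have d_eq: "d = (2 * (n \<bullet> b)) *\<^sub>R n"
    using n(2) by (simp add: d_def refl3_def algebra_simps)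
  have Ra_eq: "a - Ra = (2 * (n \<bullet> a)) *\<^sub>R n" by (simp add: Ra_def refl3_def)
  have ad: "0 < a \<bullet> d" using lt by (simp add: d_def inner_diff_right)
  have key: "Ra \<bullet> z < a \<bullet> z" if "b2 \<bullet> z < b \<bullet> z" for z
  proof -
    have "0 < d \<bullet> z" using that by (simp add: d_def inner_diff_left)
    then have "0 < (a \<bullet> d) * (d \<bullet> z)" using ad by simp
    also have "(a \<bullet> d) * (d \<bullet> z) = (2 * (n \<bullet> b))\<^sup>2 * ((n \<bullet> a) * (n \<bullet> z))"
      by (simp add: d_eq algebra_simps power2_eq_square inner_commute)
    finally have "0 < (n \<bullet> a) * (n \<bullet> z)"
      by (smt (verit) mult_nonneg_nonpos zero_le_power2)
    then have "0 < (a - Ra) \<bullet> z" by (simp add: Ra_eq)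
    then show ?thesis by (simp add: inner_diff_left)
  qed
  define H1 where "H1 = {z. \<alpha> \<le> a \<bullet> z}"
  define Hb where "Hb = {z. \<beta> \<le> b \<bullet> z}"
  define Hb2 where "Hb2 = {z. \<beta> \<le> b2 \<bullet> z}"
  define RH where "RH = {z. \<alpha> \<le> Ra \<bullet> z}"
  have m1[measurable]: "H1 \<in> sets borel" unfolding H1_def by measurable
  have m2[measurable]: "Hb \<in> sets borel" unfolding Hb_def by measurable
  have m3[measurable]: "Hb2 \<in> sets borel" unfolding Hb2_def by measurable
  have m4[measurable]: "RH \<in> sets borel" unfolding RH_def by measurable
  have g1: "{z. \<alpha> \<le> a \<bullet> z \<and> \<beta> \<le> b \<bullet> z} = H1 \<inter> Hb" by (auto simp: H1_def Hb_def)
  have g2: "{z. \<alpha> \<le> a \<bullet> z \<and> \<beta> \<le> b2 \<bullet> z} = H1 \<inter> Hb2" by (auto simp: H1_def Hb2_def)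
  have s1: "measure std_gauss3 (H1 \<inter> Hb) = measure std_gauss3 (H1 \<inter> Hb \<inter> Hb2) + measure std_gauss3 (H1 \<inter> Hb - Hb2)"
    by (rule split_meas) auto
  have s2: "measure std_gauss3 (H1 \<inter> Hb2) = measure std_gauss3 (H1 \<inter> Hb2 \<inter> Hb) + measure std_gauss3 (H1 \<inter> Hb2 - Hb)"
    by (rule split_meas) auto
  have s0: "H1 \<inter> Hb2 \<inter> Hb = H1 \<inter> Hb \<inter> Hb2" by blast
  have p1: "Ra \<bullet> refl3 n z = a \<bullet> z" for z using refl3_inner_pres[OF n(1)] by (simp add: Ra_def)
  have p2: "b \<bullet> refl3 n z = b2 \<bullet> z" for z using refl3_inner[of n b z] n(2) by simp
  have p3: "b2 \<bullet> refl3 n z = b \<bullet> z" for z using refl3_inner[of n b2 z] n(3) by simp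
  have pre: "refl3 n -` (RH \<inter> Hb - Hb2) = H1 \<inter> Hb2 - Hb"
    by (auto simp: RH_def Hb_def Hb2_def H1_def p1 p2 p3)
  have s3: "measure std_gauss3 (H1 \<inter> Hb2 - Hb) = measure std_gauss3 (RH \<inter> Hb - Hb2)"
    using std_gauss3_refl_measure[OF n(1), of "RH \<inter> Hb - Hb2"] unfolding pre by simp
  have s4: "measure std_gauss3 (H1 \<inter> Hb - Hb2) = measure std_gauss3 ((H1 \<inter> Hb - Hb2) \<inter> RH) + measure std_gauss3 ((H1 \<inter> Hb - Hb2) - RH)"
    by (rule split_meas) auto
  have s5: "(H1 \<inter> Hb - Hb2) \<inter> RH = RH \<inter> Hb - Hb2"
  proof -
    have "z \<in> H1" if "z \<in> RH" "z \<in> Hb" "z \<notin> Hb2" for z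
    proof -
      have "b2 \<bullet> z < b \<bullet> z" using that by (auto simp: Hb_def Hb2_def)
      then have "Ra \<bullet> z < a \<bullet> z" by (rule key)
      then show ?thesis using that by (auto simp: RH_def H1_def)
    qed
    then show ?thesis by blast
  qed
  define Ob where "Ob = {z. \<alpha> < a \<bullet> z} \<inter> {z. \<beta> < b \<bullet> z} \<inter> {z. b2 \<bullet> z < \<beta>} \<inter> {z. Ra \<bullet> z < \<alpha>}"
  have oOb: "open Ob" unfolding Ob_def
    by (intro open_Int open_halfspace_gt open_halfspace_lt)
  have Obsub: "Ob \<subseteq> (H1 \<inter> Hb - Hb2) - RH"
    by (auto simp: Ob_def H1_def Hb_def Hb2_def RH_def)
  have bb2: "b \<bullet> b2 < 1"
  proof -
    have "0 < (b - b2) \<bullet> (b - b2)" using ne by simp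
    moreover have "b \<bullet> b = 1" "b2 \<bullet> b2 = 1" using b b2 by (simp_all add: norm_eq_1)
    ultimately show ?thesis by (simp add: algebra_simps inner_commute)
  qed
  have bd: "0 < b \<bullet> d" and b2d: "b2 \<bullet> d < 0"
    using bb2 b b2 by (simp_all add: d_def algebra_simps norm_eq_1 inner_commute)
  have Rad: "Ra \<bullet> d = - (a \<bullet> d)"
    using refl3_inner[of n a b] refl3_inner[of n a b2] n(2,3)
    by (simp add: Ra_def d_def inner_diff_right)
  define m where "m = min (a \<bullet> d) (min (b \<bullet> d) (- (b2 \<bullet> d)))"
  have mpos: "0 < m" using ad bd b2d by (simp add: m_def)
  define t where "t = (\<bar>\<alpha>\<bar> + \<bar>\<beta>\<bar> + 1) / m"
  have tpos: "0 \<le> t" using mpos by (simp add: t_def)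
  have tm: "t * m = \<bar>\<alpha>\<bar> + \<bar>\<beta>\<bar> + 1" using mpos by (simp add: t_def)
  have tc: "\<bar>\<alpha>\<bar> + \<bar>\<beta>\<bar> + 1 \<le> t * c" if "m \<le> c" for c
    using mult_left_mono[OF that tpos] tm by simp
  have c1: "\<bar>\<alpha>\<bar> + \<bar>\<beta>\<bar> + 1 \<le> t * (a \<bullet> d)" by (rule tc) (simp add: m_def)
  have c2: "\<bar>\<alpha>\<bar> + \<bar>\<beta>\<bar> + 1 \<le> t * (b \<bullet> d)" by (rule tc) (simp add: m_def)
  have c3: "\<bar>\<alpha>\<bar> + \<bar>\<beta>\<bar> + 1 \<le> t * (- (b2 \<bullet> d))" by (rule tc) (simp add: m_def)
  have "t *\<^sub>R d \<in> Ob"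
    using c1 c2 c3 Rad unfolding Ob_def by (auto simp: abs_if split: if_splits)
  then have "0 < measure std_gauss3 Ob" by (rule std_gauss3_open_pos[OF oOb])
  also have "\<dots> \<le> measure std_gauss3 ((H1 \<inter> Hb - Hb2) - RH)"
    using Obsub by (intro G3.finite_measure_mono) auto
  finally have pos: "0 < measure std_gauss3 ((H1 \<inter> Hb - Hb2) - RH)" .
  show ?thesis unfolding g1 g2 using s1 s2 s3 s4 pos unfolding s0 s5 by linarith
qed

lemma W_inj:
  assumes a: "norm a = 1" and b: "norm b = 1" and a': "norm a' = 1" and b': "norm b' = 1"
    and eq: "measure std_gauss3 {z. \<alpha> \<le> a \<bullet> z \<and> \<beta> \<le> b \<bullet> z}
           = measure std_gauss3 {z. \<alpha> \<le> a' \<bullet> z \<and> \<beta> \<le> b' \<bullet> z}"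
  shows "a \<bullet> b = a' \<bullet> b'"
proof -
  obtain b'' where b'': "norm b'' = 1" "a \<bullet> b'' = a' \<bullet> b'"
    "measure std_gauss3 {z. \<alpha> \<le> a' \<bullet> z \<and> \<beta> \<le> b' \<bullet> z}
       = measure std_gauss3 {z. \<alpha> \<le> a \<bullet> z \<and> \<beta> \<le> b'' \<bullet> z}"
  proof (cases "a' = a")
    case True
    then show ?thesis using that[of b'] b' by simp
  next
    case False
    obtain n where n: "norm n = 1" "refl3 n a' = a" "refl3 n a = a'"
      using refl3_swap[OF a' a False] by blast
    show ?thesis
    proof (rule that[of "refl3 n b'"])
      show "norm (refl3 n b') = 1" using refl3_norm[OF n(1)] b' by simp
      show "a \<bullet> refl3 n b' = a' \<bullet> b'" using refl3_inner_pres[OF n(1), of a' b'] n(2) by simp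
      show "measure std_gauss3 {z. \<alpha> \<le> a' \<bullet> z \<and> \<beta> \<le> b' \<bullet> z}
         = measure std_gauss3 {z. \<alpha> \<le> a \<bullet> z \<and> \<beta> \<le> refl3 n b' \<bullet> z}"
        using W_refl[OF n(1), of \<alpha> a' \<beta> b'] n(2) by simp
    qed
  qed
  have eq2: "measure std_gauss3 {z. \<alpha> \<le> a \<bullet> z \<and> \<beta> \<le> b \<bullet> z}
           = measure std_gauss3 {z. \<alpha> \<le> a \<bullet> z \<and> \<beta> \<le> b'' \<bullet> z}"
    using eq b''(3) by simp
  show ?thesis
  proof (rule ccontr)
    assume "a \<bullet> b \<noteq> a' \<bullet> b'"
    then consider "a \<bullet> b'' < a \<bullet> b" | "a \<bullet> b < a \<bullet> b''" using b''(2) by linarith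
    then show False
    proof cases
      case 1 show False using W_strict[OF a b b''(1) 1, of \<alpha> \<beta>] eq2 by simp
    next
      case 2 show False using W_strict[OF a b''(1) b 2, of \<alpha> \<beta>] eq2 by simp
    qed
  qed
qed

lemma affine_measurable[measurable]: "(\<lambda>z. mu + A *v z) \<in> borel_measurable (borel :: (real^3) measure)"
proof -
  have "bounded_linear ((*v) A)" using matrix_vector_mul_linear linear_conv_bounded_linear by blast
  then show ?thesis
    by (intro borel_measurable_continuous_onI continuous_on_add continuous_on_const linear_continuous_on)
qed

lemma affine_measurable_g3: "(\<lambda>z. mu + A *v z) \<in> std_gauss3 \<rightarrow>\<^sub>M (borel :: (real^3) measure)"
  unfolding measurable_cong_sets[OF sets_std_gauss3 refl] by (rule affine_measurable)

lemma gauss3_prob: "prob_space (gauss3 mu A)"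
  unfolding gauss3_def by (rule G3.prob_space_distr) (rule affine_measurable_g3)

lemma sets_gauss3[simp]: "sets (gauss3 mu A) = sets borel" by (simp add: gauss3_def)

lemma gauss3_measure: "E \<in> sets borel \<Longrightarrow> measure (gauss3 mu A) E = measure std_gauss3 ((\<lambda>z. mu + A *v z) -` E)"
  unfolding gauss3_def by (subst measure_distr[OF affine_measurable_g3]) auto

lemma ord_prob_std: "ord_prob mu A i j k = measure std_gauss3
   {z. mu$j - mu$i \<le> (A$i - A$j) \<bullet> z \<and> mu$k - mu$j \<le> (A$j - A$k) \<bullet> z}"
proof -
  have m: "{x::real^3. x$j \<le> x$i \<and> x$k \<le> x$j} \<in> sets borel" by measurable
  show ?thesis unfolding ord_prob_def gauss3_measure[OF m]
    by (rule arg_cong[where f="measure std_gauss3"])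
       (auto simp: matrix_vector_mul_component inner_diff_left)
qed

lemma half_std: "measure (gauss3 mu A) {x. x$j \<le> x$i} = measure std_gauss3 {z. mu$j - mu$i \<le> (A$i - A$j) \<bullet> z}"
proof -
  have m: "{x::real^3. x$j \<le> x$i} \<in> sets borel" by measurable
  show ?thesis unfolding gauss3_measure[OF m]
    by (rule arg_cong[where f="measure std_gauss3"])
       (auto simp: matrix_vector_mul_component inner_diff_left)
qed

lemma diag_null: "A$p \<noteq> A$q \<Longrightarrow> measure (gauss3 mu A) {x. x$p = x$q} = 0"
proof -
  assume ne: "A$p \<noteq> A$q"
  have m: "{x::real^3. x$p = x$q} \<in> sets borel" by measurable
  have "(\<lambda>z. mu + A *v z) -` {x. x$p = x$q} = {z. (A$p - A$q) \<bullet> z = mu$q - mu$p}"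
    by (auto simp: matrix_vector_mul_component inner_diff_left)
  then show ?thesis unfolding gauss3_measure[OF m] using std_gauss3_hyperplane ne by simp
qed

lemma half_decomp:
  assumes M: "prob_space M" and sM: "sets M = sets (borel :: (real^3) measure)"
    and n1: "measure M {x. x$j = x$k} = 0" and n2: "measure M {x. x$i = x$k} = 0"
  shows "measure M {x. x$j \<le> x$i} =
     measure M {x. x$j \<le> x$i \<and> x$k \<le> x$j} + measure M {x. x$k \<le> x$i \<and> x$j \<le> x$k}
     + measure M {x. x$i \<le> x$k \<and> x$j \<le> x$i}"
proof -
  interpret prob_space M by (rule M)
  define C1 where "C1 = {x::real^3. x$j \<le> x$i \<and> x$k \<le> x$j}"
  define C2 where "C2 = {x::real^3. x$k \<le> x$i \<and> x$j \<le> x$k}"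
  define C3 where "C3 = {x::real^3. x$i \<le> x$k \<and> x$j \<le> x$i}"
  have CM: "C1 \<in> sets M" "C2 \<in> sets M" "C3 \<in> sets M"
    unfolding C1_def C2_def C3_def sM by measurable
  have E1: "{x::real^3. x$j = x$k} \<in> sets M" "{x::real^3. x$i = x$k} \<in> sets M"
    unfolding sM by measurable
  have U: "{x. x$j \<le> x$i} = (C1 \<union> C2) \<union> C3" by (auto simp: C1_def C2_def C3_def)
  have z1: "measure M (C1 \<inter> C2) = 0"
  proof -
    have "measure M (C1 \<inter> C2) \<le> measure M {x. x$j = x$k}"
      using E1(1) by (intro finite_measure_mono) (auto simp: C1_def C2_def)
    then show ?thesis using n1 measure_nonneg[of M "C1 \<inter> C2"] by linarith
  qed
  have z2: "measure M ((C1 \<union> C2) \<inter> C3) = 0"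
  proof -
    have "measure M ((C1 \<union> C2) \<inter> C3) \<le> measure M {x. x$i = x$k}"
      using E1(2) by (intro finite_measure_mono) (auto simp: C1_def C2_def C3_def)
    then show ?thesis using n2 measure_nonneg[of M "(C1 \<union> C2) \<inter> C3"] by linarith
  qed
  have f: "X \<in> fmeasurable M" if "X \<in> sets M" for X using that by (simp add: fmeasurable_eq_sets)
  have u: "C1 \<union> C2 \<in> sets M" using CM by blast
  have a: "measure M ((C1 \<union> C2) \<union> C3) = measure M (C1 \<union> C2) + measure M C3 - measure M ((C1 \<union> C2) \<inter> C3)"
    by (rule measure_Un3[OF f[OF u] f[OF CM(3)]])
  have b: "measure M (C1 \<union> C2) = measure M C1 + measure M C2 - measure M (C1 \<inter> C2)"
    by (rule measure_Un3[OF f[OF CM(1)] f[OF CM(2)]])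
  have c: "measure M {x. x$j \<le> x$i} = measure M ((C1 \<union> C2) \<union> C3)" by (simp only: U)
  have "measure M {x. x$j \<le> x$i} = measure M C1 + measure M C2 + measure M C3"
    using a b c z1 z2 by linarith
  then show ?thesis by (simp only: C1_def C2_def C3_def)
qed

lemma S_entry: "A ** transpose A = S \<Longrightarrow> S$i$j = A$i \<bullet> A$j"
  by (auto simp: matrix_mult_transpose_dot_row row_def vec_lambda_eta)

lemma rows_sum0:
  fixes mu :: "real^3" and S A :: "real^3^3"
  assumes N: "normalized3 mu S" and AS: "A ** transpose A = S"
  shows "A$3 = - A$1 - A$2"
proof -
  define t where "t = A$1 + A$2 + A$3"
  have S1: "S *v (\<chi> i. 1) = 0" using N by (simp add: normalized3_def)
  have "A$i \<bullet> t = 0" for i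
  proof -
    have "(S *v (\<chi> i. 1))$i = 0" using S1 by simp
    then show ?thesis
      by (simp add: matrix_vector_mult_def sum_3 S_entry[OF AS] t_def inner_add_right)
  qed
  then have "t \<bullet> t = 0" by (simp add: t_def inner_add_left)
  then have "t = 0" by simp
  then show ?thesis by (simp add: t_def algebra_simps eq_neg_iff_add_eq_0)
qed

lemma trace3: fixes A S :: "real^3^3" shows "A ** transpose A = S \<Longrightarrow> trace S = A$1 \<bullet> A$1 + A$2 \<bullet> A$2 + A$3 \<bullet> A$3"
  by (simp add: trace_def sum_3 S_entry)

lemma rank_le1:
  fixes A :: "real^3^3"
  assumes "\<And>i. A$i \<in> span {w}"
  shows "rank (A ** transpose A) \<le> 1"
proof -
  have "rank (A ** transpose A) \<le> rank (transpose A)" by (rule rank_mul_le_right)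
  also have "\<dots> = rank A" by (rule rank_transpose)
  also have "\<dots> = dim (rows A)" by (rule row_rank_def)
  also have "\<dots> \<le> card {w}"
    by (rule dim_le_card) (auto simp: rows_def row_def vec_lambda_eta assms)
  finally show ?thesis by simp
qed

lemma nondeg:
  fixes mu :: "real^3" and S A :: "real^3^3"
  assumes N: "normalized3 mu S" and AS: "A ** transpose A = S"
  shows "0 < ((A$1 - A$2) \<bullet> (A$1 - A$2)) * ((A$2 - A$3) \<bullet> (A$2 - A$3)) - ((A$1 - A$2) \<bullet> (A$2 - A$3))\<^sup>2"
proof (rule ccontr)
  define u where "u = A$1 - A$2"
  define v where "v = A$2 - A$3"
  assume "\<not> ?thesis"
  then have le: "(u \<bullet> u) * (v \<bullet> v) - (u \<bullet> v)\<^sup>2 \<le> 0" by (simp add: u_def v_def)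
  have A3: "A$3 = - A$1 - A$2" by (rule rows_sum0[OF N AS])
  have all: "A$i \<in> span W" if "A$1 \<in> span W" "A$2 \<in> span W" for i W
  proof -
    have "A$3 \<in> span W" unfolding A3 using that by (intro span_diff span_neg)
    then show ?thesis using that exhaust_3[of i] by auto
  qed
  obtain w where w: "\<And>i. A$i \<in> span {w}"
  proof (cases "u = 0")
    case True
    then have A1: "A$1 = A$2" by (simp add: u_def)
    have "A$i \<in> span {A$2}" for i
      by (rule all) (auto simp: A1 intro: span_base)
    then show ?thesis by (rule that)
  next
    case False
    then have up: "0 < u \<bullet> u" by simp
    define t where "t = (u \<bullet> v) / (u \<bullet> u)"
    have "(v - t *\<^sub>R u) \<bullet> (v - t *\<^sub>R u) = ((u \<bullet> u) * (v \<bullet> v) - (u \<bullet> v)\<^sup>2) / (u \<bullet> u)"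
      using up by (simp add: t_def algebra_simps inner_commute power2_eq_square field_simps)
    also have "\<dots> \<le> 0" using le up by (simp add: divide_nonpos_pos)
    finally have "(v - t *\<^sub>R u) \<bullet> (v - t *\<^sub>R u) = 0"
      using inner_ge_zero[of "v - t *\<^sub>R u"] by linarith
    then have "v - t *\<^sub>R u = 0" by simp
    then have v: "v = t *\<^sub>R u" by simp
    have e: "(3::real) *\<^sub>R A$2 = (t - 1) *\<^sub>R u"
    proof -
      have "(3::real) *\<^sub>R A$2 = A$2 + A$2 + A$2" by (simp add: vec_eq_iff)
      also have "\<dots> = - u + v" using A3 by (simp add: u_def v_def)
      finally show ?thesis using v by (simp add: algebra_simps)
    qed
    have A2: "A$2 = ((t - 1) / 3) *\<^sub>R u"
    proof -
      have "A$2 = (1/3::real) *\<^sub>R ((3::real) *\<^sub>R A$2)" by simp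
      then show ?thesis unfolding e by simp
    qed
    have "A$i \<in> span {u}" for i
    proof (rule all)
      show "A$2 \<in> span {u}" unfolding A2 by (intro span_scale span_base) simp
      then show "A$1 \<in> span {u}"
        using span_add[of "A$2" "{u}" u] by (simp add: u_def span_base)
    qed
    then show ?thesis by (rule that)
  qed
  have "rank S \<le> 1" using rank_le1[OF w] AS by simp
  then show False using N by (simp add: normalized3_def)
qed

lemma alg:
  fixes p q w p' q' w' :: real
  assumes D: "0 < p*q - w\<^sup>2" "0 < p' * q' - w'\<^sup>2"
    and pos: "0<p" "0<q" "0 < p + q + 2*w" "0<p'" "0<q'" "0 < p' + q' + 2*w'"
    and e1: "w\<^sup>2/(p*q) = w'\<^sup>2/(p' * q')"
    and e2: "(p+w)\<^sup>2/(p*(p + q + 2*w)) = (p'+w')\<^sup>2/(p'*(p' + q' + 2*w'))"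
    and e3: "(q+w)\<^sup>2/((p + q + 2*w)*q) = (q'+w')\<^sup>2/((p' + q' + 2*w')*q')"
  shows "\<exists>l>0. p = l*p' \<and> q = l*q' \<and> w = l*w'"
proof -
  define sA where "sA = p + q + 2*w"
  define sB where "sB = p' + q' + 2*w'"
  define d where "d = p*q - w\<^sup>2"
  define d' where "d' = p' * q' - w'\<^sup>2"
  have sp: "0 < sA" "0 < sB" using pos by (simp_all add: sA_def sB_def)
  have dp: "0 < d" "0 < d'" using D by (simp_all add: d_def d'_def)
  have E1: "d * (p' * q') = d' * (p*q)"
  proof -
    have "w\<^sup>2 * (p' * q') = w'\<^sup>2 * (p*q)" using e1 pos by (simp add: field_simps)
    then show ?thesis by (simp add: d_def d'_def algebra_simps)
  qed
  have E2: "d * (p' * sB) = d' * (p * sA)"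
  proof -
    have h: "(p+w)\<^sup>2 * (p' * sB) = (p'+w')\<^sup>2 * (p * sA)" using e2 pos sp
      unfolding sA_def[symmetric] sB_def[symmetric] by (simp add: field_simps)
    have dd: "d = p * sA - (p+w)\<^sup>2" "d' = p' * sB - (p'+w')\<^sup>2"
      by (simp_all add: d_def d'_def sA_def sB_def power2_eq_square algebra_simps)
    have "d * (p' * sB) = (p * sA) * (p' * sB) - (p+w)\<^sup>2 * (p' * sB)" by (simp add: dd algebra_simps)
    also have "\<dots> = (p * sA) * (p' * sB) - (p'+w')\<^sup>2 * (p * sA)" by (simp only: h)
    also have "\<dots> = d' * (p * sA)" by (simp add: dd algebra_simps)
    finally show ?thesis .
  qed
  have E3: "d * (sB * q') = d' * (sA * q)"
  proof -
    have h: "(q+w)\<^sup>2 * (sB * q') = (q'+w')\<^sup>2 * (sA * q)" using e3 pos sp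
      unfolding sA_def[symmetric] sB_def[symmetric] by (simp add: field_simps)
    have dd: "d = sA * q - (q+w)\<^sup>2" "d' = sB * q' - (q'+w')\<^sup>2"
      by (simp_all add: d_def d'_def sA_def sB_def power2_eq_square algebra_simps)
    have "d * (sB * q') = (sA * q) * (sB * q') - (q+w)\<^sup>2 * (sB * q')" by (simp add: dd algebra_simps)
    also have "\<dots> = (sA * q) * (sB * q') - (q'+w')\<^sup>2 * (sA * q)" by (simp only: h)
    also have "\<dots> = d' * (sA * q)" by (simp add: dd algebra_simps)
    finally show ?thesis .
  qed
  have "d * p' * (q' * sA - sB * q) = 0"
  proof -
    have "d * p' * (q' * sA - sB * q) = (d * (p' * q')) * sA - (d * (p' * sB)) * q" by (simp add: algebra_simps)
    also have "\<dots> = (d' * (p*q)) * sA - (d' * (p * sA)) * q" by (simp only: E1 E2)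
    also have "\<dots> = 0" by (simp add: algebra_simps)
    finally show ?thesis .
  qed
  then have Q: "q' * sA = sB * q" using dp pos by simp
  have "d * q' * (p' * sA - sB * p) = 0"
  proof -
    have "d * q' * (p' * sA - sB * p) = (d * (p' * q')) * sA - (d * (sB * q')) * p" by (simp add: algebra_simps)
    also have "\<dots> = (d' * (p*q)) * sA - (d' * (sA * q)) * p" by (simp only: E1 E3)
    also have "\<dots> = 0" by (simp add: algebra_simps)
    finally show ?thesis .
  qed
  then have P: "p' * sA = sB * p" using dp pos by simp
  define l where "l = sA / sB"
  have lp: "0 < l" using sp by (simp add: l_def)
  have p: "p = l * p'" using P sp by (simp add: l_def field_simps)
  have q: "q = l * q'" using Q sp by (simp add: l_def field_simps)
  have sl: "sA = l * sB" using sp by (simp add: l_def)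
  have w: "w = l * w'"
  proof -
    have "2 * w = sA - p - q" by (simp add: sA_def)
    also have "\<dots> = l * (sB - p' - q')" by (simp add: sl p q algebra_simps)
    also have "\<dots> = l * (2 * w')" by (simp add: sB_def)
    finally show ?thesis by simp
  qed
  show ?thesis using lp p q w by blast
qed

definition nv :: "real^3 \<Rightarrow> real^3" where "nv d = (1 / norm d) *\<^sub>R d"

lemma norm_nv: "d \<noteq> 0 \<Longrightarrow> norm (nv d) = 1"
  by (simp add: nv_def)

lemma le_nv: "d \<noteq> 0 \<Longrightarrow> (c \<le> d \<bullet> z) = (c / norm d \<le> nv d \<bullet> z)"
  by (simp add: nv_def divide_le_cancel)

lemma sq_nv: "(nv x \<bullet> nv y)\<^sup>2 = (x \<bullet> y)\<^sup>2 / ((x \<bullet> x) * (y \<bullet> y))"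
proof -
  have "nv x \<bullet> nv y = (x \<bullet> y) / (norm x * norm y)" by (simp add: nv_def)
  then show ?thesis by (simp add: power_divide power_mult_distrib power2_norm_eq_inner)
qed

lemma ord_prob_norm:
  assumes "A$i \<noteq> A$j" "A$j \<noteq> A$k"
  shows "ord_prob mu A i j k = measure std_gauss3
    {z. (mu$j - mu$i) / norm (A$i - A$j) \<le> nv (A$i - A$j) \<bullet> z \<and>
        (mu$k - mu$j) / norm (A$j - A$k) \<le> nv (A$j - A$k) \<bullet> z}"
proof -
  have n1: "A$i - A$j \<noteq> 0" and n2: "A$j - A$k \<noteq> 0" using assms by auto
  show ?thesis unfolding ord_prob_std
    by (rule arg_cong[where f="measure std_gauss3"]) (auto simp: le_nv[OF n1] le_nv[OF n2])
qed

lemma half_norm: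
  assumes "A$i \<noteq> A$j"
  shows "measure (gauss3 mu A) {x. x$j \<le> x$i} = measure std_gauss3
    {z. (mu$j - mu$i) / norm (A$i - A$j) \<le> nv (A$i - A$j) \<bullet> z}"
proof -
  have n1: "A$i - A$j \<noteq> 0" using assms by auto
  show ?thesis unfolding half_std
    by (rule arg_cong[where f="measure std_gauss3"]) (auto simp: le_nv[OF n1])
qed

lemma half_gauss:
  assumes "A$i \<noteq> A$k" "A$j \<noteq> A$k"
  shows "measure (gauss3 mu A) {x. x$j \<le> x$i} = ord_prob mu A i j k + ord_prob mu A i k j + ord_prob mu A k i j"
  unfolding ord_prob_def
  by (rule half_decomp[OF gauss3_prob sets_gauss3 diag_null diag_null]) (use assms in auto)

lemma half_eq:
  fixes mu mu' :: "real^3" and A A' :: "real^3^3"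
  assumes d: "A$i \<noteq> A$j" "A$i \<noteq> A$k" "A$j \<noteq> A$k"
    and d': "A'$i \<noteq> A'$j" "A'$i \<noteq> A'$k" "A'$j \<noteq> A'$k"
    and o1: "ord_prob mu A i j k = ord_prob mu' A' i j k"
    and o2: "ord_prob mu A i k j = ord_prob mu' A' i k j"
    and o3: "ord_prob mu A k i j = ord_prob mu' A' k i j"
  shows "(mu$j - mu$i) / norm (A$i - A$j) = (mu'$j - mu'$i) / norm (A'$i - A'$j)"
proof (rule HS_inj)
  show "norm (nv (A$i - A$j)) = 1" using d by (intro norm_nv) auto
  show "norm (nv (A'$i - A'$j)) = 1" using d' by (intro norm_nv) auto
  have "measure (gauss3 mu A) {x. x$j \<le> x$i} = measure (gauss3 mu' A') {x. x$j \<le> x$i}"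
    using half_gauss[of A i k j mu] half_gauss[of A' i k j mu'] d d' o1 o2 o3 by simp
  then show "measure std_gauss3 {z. (mu$j - mu$i) / norm (A$i - A$j) \<le> nv (A$i - A$j) \<bullet> z}
    = measure std_gauss3 {z. (mu'$j - mu'$i) / norm (A'$i - A'$j) \<le> nv (A'$i - A'$j) \<bullet> z}"
    using half_norm[OF d(1), of mu] half_norm[OF d'(1), of mu'] by simp
qed

lemma cone_eq:
  fixes mu mu' :: "real^3" and A A' :: "real^3^3"
  assumes d: "A$i \<noteq> A$j" "A$j \<noteq> A$k"
    and d': "A'$i \<noteq> A'$j" "A'$j \<noteq> A'$k"
    and h1: "(mu$j - mu$i) / norm (A$i - A$j) = (mu'$j - mu'$i) / norm (A'$i - A'$j)"
    and h2: "(mu$k - mu$j) / norm (A$j - A$k) = (mu'$k - mu'$j) / norm (A'$j - A'$k)"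
    and o: "ord_prob mu A i j k = ord_prob mu' A' i j k"
  shows "nv (A$i - A$j) \<bullet> nv (A$j - A$k) = nv (A'$i - A'$j) \<bullet> nv (A'$j - A'$k)"
proof (rule W_inj)
  show "norm (nv (A$i - A$j)) = 1" "norm (nv (A$j - A$k)) = 1"
    "norm (nv (A'$i - A'$j)) = 1" "norm (nv (A'$j - A'$k)) = 1"
    using d d' by (auto intro!: norm_nv)
  show "measure std_gauss3 {z. (mu$j - mu$i) / norm (A$i - A$j) \<le> nv (A$i - A$j) \<bullet> z \<and>
        (mu$k - mu$j) / norm (A$j - A$k) \<le> nv (A$j - A$k) \<bullet> z} =
    measure std_gauss3 {z. (mu$j - mu$i) / norm (A$i - A$j) \<le> nv (A'$i - A'$j) \<bullet> z \<and>
        (mu$k - mu$j) / norm (A$j - A$k) \<le> nv (A'$j - A'$k) \<bullet> z}"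
    using o ord_prob_norm[OF d, of mu] ord_prob_norm[OF d', of mu'] h1 h2 by simp
qed

lemma nd_facts:
  fixes u v :: "real^3"
  assumes "0 < (u \<bullet> u) * (v \<bullet> v) - (u \<bullet> v)\<^sup>2"
  shows "u \<noteq> 0" "v \<noteq> 0" "u + v \<noteq> 0"
proof -
  show "u \<noteq> 0" using assms by auto
  show "v \<noteq> 0" using assms by auto
  show "u + v \<noteq> 0"
  proof
    assume "u + v = 0"
    then have "v = - u" by (simp add: add_eq_0_iff2)
    then show False using assms by (simp add: power2_eq_square)
  qed
qed

theorem theorem2:
  fixes mu mu' :: "real^3" and S S' A A' :: "real^3^3"
  assumes "normalized3 mu S" and "normalized3 mu' S'"
    and "A ** transpose A = S" and "A' ** transpose A' = S'"
    and "\<And>i j k. i \<noteq> j \<Longrightarrow> j \<noteq> k \<Longrightarrow> i \<noteq> k \<Longrightarrow>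
           ord_prob mu A i j k = ord_prob mu' A' i j k"
  shows "mu = mu' \<and> S = S'"
proof -
  note N = assms(1) and N' = assms(2) and AS = assms(3) and AS' = assms(4) and ord = assms(5)
  have A3: "A$3 = - A$1 - A$2" by (rule rows_sum0[OF N AS])
  have A3': "A'$3 = - A'$1 - A'$2" by (rule rows_sum0[OF N' AS'])
  define u where "u = A$1 - A$2"
  define v where "v = A$2 - A$3"
  define u' where "u' = A'$1 - A'$2"
  define v' where "v' = A'$2 - A'$3"
  have nd: "0 < (u \<bullet> u) * (v \<bullet> v) - (u \<bullet> v)\<^sup>2" using nondeg[OF N AS] by (simp add: u_def v_def)
  have nd': "0 < (u' \<bullet> u') * (v' \<bullet> v') - (u' \<bullet> v')\<^sup>2" using nondeg[OF N' AS'] by (simp add: u'_def v'_def)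
  note nf = nd_facts[OF nd] and nf' = nd_facts[OF nd']
  have uv: "u + v = A$1 - A$3" by (simp add: u_def v_def)
  have uv': "u' + v' = A'$1 - A'$3" by (simp add: u'_def v'_def)
  have d12: "A$1 \<noteq> A$2" "A$2 \<noteq> A$1" using nf(1) by (auto simp: u_def)
  have d23: "A$2 \<noteq> A$3" "A$3 \<noteq> A$2" using nf(2) by (auto simp: v_def)
  have d13: "A$1 \<noteq> A$3" "A$3 \<noteq> A$1" using nf(3) uv by auto
  have d12': "A'$1 \<noteq> A'$2" "A'$2 \<noteq> A'$1" using nf'(1) by (auto simp: u'_def)
  have d23': "A'$2 \<noteq> A'$3" "A'$3 \<noteq> A'$2" using nf'(2) by (auto simp: v'_def)
  have d13': "A'$1 \<noteq> A'$3" "A'$3 \<noteq> A'$1" using nf'(3) uv' by auto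
  have o: "ord_prob mu A i j k = ord_prob mu' A' i j k" if "i \<noteq> j" "j \<noteq> k" "i \<noteq> k" for i j k
    using ord that by blast
  have h12: "(mu$2 - mu$1) / norm (A$1 - A$2) = (mu'$2 - mu'$1) / norm (A'$1 - A'$2)"
    by (rule half_eq[where k=3]) (use d12 d23 d13 d12' d23' d13' in \<open>auto intro!: o\<close>)
  have h23: "(mu$3 - mu$2) / norm (A$2 - A$3) = (mu'$3 - mu'$2) / norm (A'$2 - A'$3)"
    by (rule half_eq[where k=1]) (use d12 d23 d13 d12' d23' d13' in \<open>auto intro!: o\<close>)
  have h13: "(mu$3 - mu$1) / norm (A$1 - A$3) = (mu'$3 - mu'$1) / norm (A'$1 - A'$3)"
    by (rule half_eq[where k=2]) (use d12 d23 d13 d12' d23' d13' in \<open>auto intro!: o\<close>)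
  have h21: "(mu$1 - mu$2) / norm (A$2 - A$1) = (mu'$1 - mu'$2) / norm (A'$2 - A'$1)"
    by (rule half_eq[where k=3]) (use d12 d23 d13 d12' d23' d13' in \<open>auto intro!: o\<close>)
  have h32: "(mu$2 - mu$3) / norm (A$3 - A$2) = (mu'$2 - mu'$3) / norm (A'$3 - A'$2)"
    by (rule half_eq[where k=1]) (use d12 d23 d13 d12' d23' d13' in \<open>auto intro!: o\<close>)
  have c1: "nv (A$1 - A$2) \<bullet> nv (A$2 - A$3) = nv (A'$1 - A'$2) \<bullet> nv (A'$2 - A'$3)"
    by (rule cone_eq[OF _ _ _ _ h12 h23]) (use d12 d23 d12' d23' in \<open>auto intro!: o\<close>)
  have c2: "nv (A$2 - A$1) \<bullet> nv (A$1 - A$3) = nv (A'$2 - A'$1) \<bullet> nv (A'$1 - A'$3)"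
    by (rule cone_eq[OF _ _ _ _ h21 h13]) (use d12 d13 d12' d13' in \<open>auto intro!: o\<close>)
  have c3: "nv (A$1 - A$3) \<bullet> nv (A$3 - A$2) = nv (A'$1 - A'$3) \<bullet> nv (A'$3 - A'$2)"
    by (rule cone_eq[OF _ _ _ _ h13 h32]) (use d13 d23 d13' d23' in \<open>auto intro!: o\<close>)
  define p where "p = u \<bullet> u"
  define q where "q = v \<bullet> v"
  define w where "w = u \<bullet> v"
  define p' where "p' = u' \<bullet> u'"
  define q' where "q' = v' \<bullet> v'"
  define w' where "w' = u' \<bullet> v'"
  have m1: "A$2 - A$1 = - u" "A$3 - A$2 = - v" by (simp_all add: u_def v_def)
  have m1': "A'$2 - A'$1 = - u'" "A'$3 - A'$2 = - v'" by (simp_all add: u'_def v'_def)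
  have ss: "(u + v) \<bullet> (u + v) = p + q + 2 * w"
    by (simp add: p_def q_def w_def inner_add_left inner_add_right inner_commute)
  have ss': "(u' + v') \<bullet> (u' + v') = p' + q' + 2 * w'"
    by (simp add: p'_def q'_def w'_def inner_add_left inner_add_right inner_commute)
  have e1: "w\<^sup>2 / (p * q) = w'\<^sup>2 / (p' * q')"
    using arg_cong[OF c1, of "\<lambda>t. t\<^sup>2"] unfolding sq_nv
    by (simp add: u_def[symmetric] v_def[symmetric] u'_def[symmetric] v'_def[symmetric] p_def q_def w_def p'_def q'_def w'_def)
  have e2: "(p + w)\<^sup>2 / (p * (p + q + 2 * w)) = (p' + w')\<^sup>2 / (p' * (p' + q' + 2 * w'))"
  proof -
    have "(nv (A$2 - A$1) \<bullet> nv (A$1 - A$3))\<^sup>2 = (nv (A'$2 - A'$1) \<bullet> nv (A'$1 - A'$3))\<^sup>2"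
      using c2 by simp
    then have "((- u) \<bullet> (u + v))\<^sup>2 / (((- u) \<bullet> (- u)) * ((u + v) \<bullet> (u + v)))
        = ((- u') \<bullet> (u' + v'))\<^sup>2 / (((- u') \<bullet> (- u')) * ((u' + v') \<bullet> (u' + v')))"
      unfolding sq_nv m1 m1' uv[symmetric] uv'[symmetric] .
    moreover have "((- u) \<bullet> (u + v))\<^sup>2 = (p + w)\<^sup>2" "((- u') \<bullet> (u' + v'))\<^sup>2 = (p' + w')\<^sup>2"
      by (simp_all add: p_def w_def p'_def w'_def inner_add_right power2_eq_square algebra_simps)
    ultimately show ?thesis unfolding ss ss' by (simp add: p_def p'_def)
  qed
  have e3: "(q + w)\<^sup>2 / ((p + q + 2 * w) * q) = (q' + w')\<^sup>2 / ((p' + q' + 2 * w') * q')"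
  proof -
    have "(nv (A$1 - A$3) \<bullet> nv (A$3 - A$2))\<^sup>2 = (nv (A'$1 - A'$3) \<bullet> nv (A'$3 - A'$2))\<^sup>2"
      using c3 by simp
    then have "((u + v) \<bullet> (- v))\<^sup>2 / (((u + v) \<bullet> (u + v)) * ((- v) \<bullet> (- v)))
        = ((u' + v') \<bullet> (- v'))\<^sup>2 / (((u' + v') \<bullet> (u' + v')) * ((- v') \<bullet> (- v')))"
      unfolding sq_nv m1 m1' uv[symmetric] uv'[symmetric] .
    moreover have "((u + v) \<bullet> (- v))\<^sup>2 = (q + w)\<^sup>2" "((u' + v') \<bullet> (- v'))\<^sup>2 = (q' + w')\<^sup>2"
      by (simp_all add: q_def w_def q'_def w'_def inner_add_left power2_eq_square algebra_simps)
    ultimately show ?thesis unfolding ss ss' by (simp add: q_def q'_def)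
  qed
  have pos: "0 < p" "0 < q" "0 < p + q + 2 * w" "0 < p'" "0 < q'" "0 < p' + q' + 2 * w'"
    using nf nf' ss ss' by (simp_all add: p_def q_def p'_def q'_def) (metis inner_gt_zero_iff)+
  obtain l where l: "0 < l" "p = l * p'" "q = l * q'" "w = l * w'"
    using alg[OF _ _ pos e1 e2 e3] nd nd' unfolding p_def q_def w_def p'_def q'_def w'_def by blast
  define a where "a = A$1 \<bullet> A$1"
  define b where "b = A$1 \<bullet> A$2"
  define c where "c = A$2 \<bullet> A$2"
  define a' where "a' = A'$1 \<bullet> A'$1"
  define b' where "b' = A'$1 \<bullet> A'$2"
  define c' where "c' = A'$2 \<bullet> A'$2"
  have vv: "v = A$1 + (2::real) *\<^sub>R A$2" by (simp add: v_def A3 vec_eq_iff)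
  have vv': "v' = A'$1 + (2::real) *\<^sub>R A'$2" by (simp add: v'_def A3' vec_eq_iff)
  have P: "p = a - 2 * b + c" "q = a + 4 * b + 4 * c" "w = a + b - 2 * c"
    by (simp_all add: p_def q_def w_def u_def vv a_def b_def c_def inner_add_left inner_add_right
        inner_diff_left inner_diff_right inner_commute algebra_simps)
  have P': "p' = a' - 2 * b' + c'" "q' = a' + 4 * b' + 4 * c'" "w' = a' + b' - 2 * c'"
    by (simp_all add: p'_def q'_def w'_def u'_def vv' a'_def b'_def c'_def inner_add_left inner_add_right
        inner_diff_left inner_diff_right inner_commute algebra_simps)
  have T: "2 * a + 2 * b + 2 * c = 3"
  proof -
    have "trace S = 3" using N by (simp add: normalized3_def)
    then show ?thesis unfolding trace3[OF AS] A3
      by (simp add: a_def b_def c_def inner_add_left inner_add_right inner_diff_left inner_diff_right inner_commute algebra_simps)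
  qed
  have T': "2 * a' + 2 * b' + 2 * c' = 3"
  proof -
    have "trace S' = 3" using N' by (simp add: normalized3_def)
    then show ?thesis unfolding trace3[OF AS'] A3'
      by (simp add: a'_def b'_def c'_def inner_add_left inner_add_right inner_diff_left inner_diff_right inner_commute algebra_simps)
  qed
  have "p + q + w = 9 / 2" using P T by linarith
  moreover have "p' + q' + w' = 9 / 2" using P' T' by linarith
  moreover have "p + q + w = l * (p' + q' + w')" using l by (simp add: algebra_simps)
  ultimately have l1: "l = 1" by simp
  have pe: "p = p'" "q = q'" "w = w'" using l l1 by simp_all
  have abc: "a = a'" "b = b'" "c = c'" using P P' pe by linarith+
  have G: "A$i \<bullet> A$j = A'$i \<bullet> A'$j" for i j
  proof -
    have g: "A$1 \<bullet> A$1 = A'$1 \<bullet> A'$1" "A$1 \<bullet> A$2 = A'$1 \<bullet> A'$2" "A$2 \<bullet> A$2 = A'$2 \<bullet> A'$2"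
      "A$2 \<bullet> A$1 = A'$2 \<bullet> A'$1"
      using abc by (simp_all add: a_def b_def c_def a'_def b'_def c'_def inner_commute)
    show ?thesis using exhaust_3[of i] exhaust_3[of j]
      by (auto simp: A3 A3' inner_diff_left inner_diff_right g)
  qed
  have SS: "S = S'"
    by (simp add: vec_eq_iff S_entry[OF AS] S_entry[OF AS'] G)
  have nu: "norm u = norm u'" using pe(1) by (simp add: p_def p'_def norm_eq_sqrt_inner)
  have nvv: "norm v = norm v'" using pe(2) by (simp add: q_def q'_def norm_eq_sqrt_inner)
  have nu0: "norm u \<noteq> 0" "norm v \<noteq> 0" using nf by auto
  have mu12: "mu$2 - mu$1 = mu'$2 - mu'$1"
    using h12 nu nu0 by (simp add: u_def[symmetric] u'_def[symmetric])
  have mu23: "mu$3 - mu$2 = mu'$3 - mu'$2"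
    using h23 nvv nu0 by (simp add: v_def[symmetric] v'_def[symmetric])
  have s0: "mu$1 + mu$2 + mu$3 = 0" using N by (simp add: normalized3_def sum_3)
  have s0': "mu'$1 + mu'$2 + mu'$3 = 0" using N' by (simp add: normalized3_def sum_3)
  have "mu$i = mu'$i" for i
  proof -
    have "mu$1 = mu'$1" "mu$2 = mu'$2" "mu$3 = mu'$3" using mu12 mu23 s0 s0' by linarith+
    then show ?thesis using exhaust_3[of i] by auto
  qed
  then have "mu = mu'" by (simp add: vec_eq_iff)
  then show ?thesis using SS by simp
qed

end
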